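(* For every positive integer $n$, the order supergraph $\mathcal{S}(S_n)$ of the symmetric group $S_n$ is cyclically separable if and only if $n \geq 4$.
   Context: All graphs are simple and undirected. For a finite group $G$, the order supergraph $\mathcal{S}(G)$ is the graph with vertex set $G$ in which two distinct vertices $x,y$ are adjacent if and only if the order of $x$ divides the order of $y$ or the order of $y$ divides the order of $x$. For a graph $\Gamma$, a vertex cutset is a set $S$ of vertices such that $\Gamma - S$ is disconnected; a cyclic vertex cutset is a vertex cutset $S$ such that $\Gamma - S$ has at least two connected components each of which contains a cycle. $\Gamma$ is called cyclically separable if it has a cyclic vertex cutset. *)

theory Defs
  imports "HOL-Algebra.Sym_Groups" "HOL-Algebra.Multiplicative_Group"
begin

text \<open>A simple undirected graph is given by a vertex set V and a symmetric,
irreflexive adjacency predicate E (only its values on V matter).\<close>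

definition adj_in :: "'a set \<Rightarrow> ('a \<Rightarrow> 'a \<Rightarrow> bool) \<Rightarrow> 'a \<Rightarrow> 'a \<Rightarrow> bool" where
  "adj_in U E x y \<longleftrightarrow> x \<in> U \<and> y \<in> U \<and> E x y"

definition component_of :: "'a set \<Rightarrow> ('a \<Rightarrow> 'a \<Rightarrow> bool) \<Rightarrow> 'a \<Rightarrow> 'a set" where
  "component_of U E x = {y. (adj_in U E)\<^sup>*\<^sup>* x y}"

definition components :: "'a set \<Rightarrow> ('a \<Rightarrow> 'a \<Rightarrow> bool) \<Rightarrow> 'a set set" where
  "components U E = component_of U E ` U"

definition has_cycle_in :: "'a set \<Rightarrow> ('a \<Rightarrow> 'a \<Rightarrow> bool) \<Rightarrow> bool" where
  "has_cycle_in C E \<longleftrightarrow> (\<exists>xs. length xs \<ge> 3 \<and> distinct xs \<and> set xs \<subseteq> C \<and>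
      (\<forall>i < length xs. E (xs ! i) (xs ! ((i + 1) mod length xs))))"

definition vertex_cutset :: "'a set \<Rightarrow> ('a \<Rightarrow> 'a \<Rightarrow> bool) \<Rightarrow> 'a set \<Rightarrow> bool" where
  "vertex_cutset V E S \<longleftrightarrow> S \<subseteq> V \<and> (\<exists>C1 C2. C1 \<in> components (V - S) E \<and>
      C2 \<in> components (V - S) E \<and> C1 \<noteq> C2)"

definition cyclic_vertex_cutset :: "'a set \<Rightarrow> ('a \<Rightarrow> 'a \<Rightarrow> bool) \<Rightarrow> 'a set \<Rightarrow> bool" where
  "cyclic_vertex_cutset V E S \<longleftrightarrow> vertex_cutset V E S \<and>
     (\<exists>C1 C2. C1 \<in> components (V - S) E \<and> C2 \<in> components (V - S) E \<and> C1 \<noteq> C2 \<and>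
        has_cycle_in C1 E \<and> has_cycle_in C2 E)"

definition cyclically_separable :: "'a set \<Rightarrow> ('a \<Rightarrow> 'a \<Rightarrow> bool) \<Rightarrow> bool" where
  "cyclically_separable V E \<longleftrightarrow> (\<exists>S. cyclic_vertex_cutset V E S)"

definition order_supergraph_adj :: "('a, 'b) monoid_scheme \<Rightarrow> 'a \<Rightarrow> 'a \<Rightarrow> bool" where
  "order_supergraph_adj G x y \<longleftrightarrow> x \<noteq> y \<and>
     (group.ord G x dvd group.ord G y \<or> group.ord G y dvd group.ord G x)"

end

theory Submission
  imports Defs
begin

lemma comp_sub: "x \<in> U \<Longrightarrow> component_of U E x \<subseteq> U"
proof
  fix y assume x: "x \<in> U" and "y \<in> component_of U E x"
  hence "(adj_in U E)\<^sup>*\<^sup>* x y" by (simp add: component_of_def)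
  thus "y \<in> U" using x by (induction rule: rtranclp.induct) (auto simp: adj_in_def)
qed

lemma adj_sym:
  assumes "\<And>a b. E a b \<Longrightarrow> E b a"
  shows "(adj_in U E)\<^sup>*\<^sup>* a b \<Longrightarrow> (adj_in U E)\<^sup>*\<^sup>* b a"
proof (induction rule: rtranclp.induct)
  case (rtrancl_into_rtrancl a b c)
  have "adj_in U E c b" using rtrancl_into_rtrancl(2) assms by (auto simp: adj_in_def)
  thus ?case using rtrancl_into_rtrancl(3) by (meson converse_rtranclp_into_rtranclp)
qed simp

lemma comp_eq:
  assumes "\<And>a b. E a b \<Longrightarrow> E b a" and "y \<in> component_of U E x"
  shows "component_of U E y = component_of U E x"
proof -
  have xy: "(adj_in U E)\<^sup>*\<^sup>* x y" using assms(2) by (simp add: component_of_def)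
  have yx: "(adj_in U E)\<^sup>*\<^sup>* y x" by (rule adj_sym[OF assms(1) xy])
  show ?thesis unfolding component_of_def
    using xy yx by (auto intro: rtranclp_trans)
qed

lemma comps_disjoint:
  assumes "\<And>a b. E a b \<Longrightarrow> E b a" and "C1 \<in> components U E" "C2 \<in> components U E" "C1 \<noteq> C2"
  shows "C1 \<inter> C2 = {}"
proof (rule ccontr)
  assume "C1 \<inter> C2 \<noteq> {}"
  then obtain z where z: "z \<in> C1" "z \<in> C2" by blast
  obtain x1 x2 where e: "C1 = component_of U E x1" "C2 = component_of U E x2"
    using assms(2,3) unfolding components_def by blast
  have "component_of U E z = component_of U E x1"
    by (rule comp_eq[of E, OF assms(1)]) (use z(1) in \<open>unfold e(1)\<close>)
  moreover have "component_of U E z = component_of U E x2"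
    by (rule comp_eq[of E, OF assms(1)]) (use z(2) in \<open>unfold e(2)\<close>)
  ultimately show False using e assms(4) by simp
qed

lemma comps_sub: "C \<in> components U E \<Longrightarrow> C \<subseteq> U"
  by (auto simp: components_def dest: comp_sub)

lemma cycle_card:
  assumes "has_cycle_in C E" "finite C" shows "card C \<ge> 3"
proof -
  obtain xs where xs: "length xs \<ge> 3" "distinct xs" "set xs \<subseteq> C"
    using assms(1) by (auto simp: has_cycle_in_def)
  have "card (set xs) = length xs" using xs(2) by (simp add: distinct_card)
  thus ?thesis using card_mono[OF assms(2) xs(3)] xs(1) by linarith
qed

lemma E_sym: "order_supergraph_adj G a b \<Longrightarrow> order_supergraph_adj G b a"
  by (auto simp: order_supergraph_adj_def)

lemma ord_2:
  assumes "x permutes {1..n}" "x \<circ> x = id" "x \<noteq> id"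
  shows "group.ord (sym_group n) x = 2"
proof -
  interpret group "sym_group n" by (rule sym_group_is_group)
  have c: "x \<in> carrier (sym_group n)" using assms(1) by (simp add: sym_group_carrier)
  have "x [^]\<^bsub>sym_group n\<^esub> (2::nat) = \<one>\<^bsub>sym_group n\<^esub>"
    using assms(2) by (simp add: numeral_2_eq_2 sym_group_mult sym_group_one)
  hence d: "ord x dvd 2" using pow_eq_id[OF c] by simp
  have "ord x \<noteq> 1" using ord_eq_1[OF c] assms(3) by (simp add: sym_group_one)
  moreover have "ord x \<noteq> 0"
  proof
    assume "ord x = 0" with d show False by simp
  qed
  moreover have "ord x \<le> 2" using d by (simp add: dvd_imp_le)
  ultimately show ?thesis by linarith
qed

lemma ord_3:
  assumes "x permutes {1..n}" "x \<circ> x \<circ> x = id" "x \<noteq> id"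
  shows "group.ord (sym_group n) x = 3"
proof -
  interpret group "sym_group n" by (rule sym_group_is_group)
  have c: "x \<in> carrier (sym_group n)" using assms(1) by (simp add: sym_group_carrier)
  have "x [^]\<^bsub>sym_group n\<^esub> (3::nat) = \<one>\<^bsub>sym_group n\<^esub>"
    using assms(2) by (simp add: numeral_3_eq_3 sym_group_mult sym_group_one comp_assoc)
  hence d: "ord x dvd 3" using pow_eq_id[OF c] by simp
  have "ord x \<noteq> 1" using ord_eq_1[OF c] assms(3) by (simp add: sym_group_one)
  moreover have "ord x \<noteq> 0"
  proof
    assume "ord x = 0" with d show False by simp
  qed
  moreover have "ord x \<noteq> 2" using d by auto
  moreover have "ord x \<le> 3" using d by (simp add: dvd_imp_le)
  ultimately show ?thesis by linarith
qed

lemma three_cycle: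
  assumes "a \<noteq> b" "b \<noteq> c" "a \<noteq> c"
  shows "(Transposition.transpose a b \<circ> Transposition.transpose b c) \<circ>
         (Transposition.transpose a b \<circ> Transposition.transpose b c) \<circ>
         (Transposition.transpose a b \<circ> Transposition.transpose b c) = id"
proof (rule ext)
  fix x
  show "((Transposition.transpose a b \<circ> Transposition.transpose b c) \<circ>
         (Transposition.transpose a b \<circ> Transposition.transpose b c) \<circ>
         (Transposition.transpose a b \<circ> Transposition.transpose b c)) x = id x"
  proof (cases "x = a")
    case True thus ?thesis using assms by (simp add: transpose_def)
  next
    case xa: False show ?thesis
    proof (cases "x = b")
      case True thus ?thesis using assms by (simp add: transpose_def)
    next
      case xb: False show ?thesis
      proof (cases "x = c")
        case True thus ?thesis using assms by (simp add: transpose_def)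
      next
        case False thus ?thesis using assms xa xb by (simp add: transpose_def)
      qed
    qed
  qed
qed

lemma ord_id_sym: "group.ord (sym_group n) id = 1"
  using group.ord_id[OF sym_group_is_group, of n] by (simp add: sym_group_one)

lemma small_not_sep:
  assumes "n \<ge> 1" "n < 4"
  shows "\<not> cyclically_separable (carrier (sym_group n)) (order_supergraph_adj (sym_group n))"
proof
  define V where "V = carrier (sym_group n)"
  define E where "E = order_supergraph_adj (sym_group n)"
  assume "cyclically_separable (carrier (sym_group n)) (order_supergraph_adj (sym_group n))"
  then obtain S C1 C2 where S: "S \<subseteq> V" and C: "C1 \<in> components (V - S) E" "C2 \<in> components (V - S) E"
    "C1 \<noteq> C2" "has_cycle_in C1 E" "has_cycle_in C2 E"
    unfolding cyclically_separable_def cyclic_vertex_cutset_def vertex_cutset_def V_def E_def by blast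
  have Esym: "\<And>a b. E a b \<Longrightarrow> E b a" unfolding E_def by (rule E_sym)
  have finV: "finite V" unfolding V_def
    by (simp add: sym_group_def finite_permutations)
  have cardV: "card V = fact n" unfolding V_def
    by (simp add: sym_group_def card_permutations)
  have "fact n \<le> (6::nat)"
  proof -
    have "n = 1 \<or> n = 2 \<or> n = 3" using assms by auto
    thus ?thesis by (auto simp: numeral_3_eq_3 numeral_2_eq_2)
  qed
  hence cV: "card V \<le> 6" using cardV by simp
  have idV: "id \<in> V" unfolding V_def by (simp add: sym_group_carrier permutes_id)
  show False
  proof (cases "id \<in> S")
    case True
    have sub1: "C1 \<subseteq> V - S" "C2 \<subseteq> V - S" using C(1,2) by (auto dest: comps_sub)
    have fin: "finite (V - S)" using finV by simp
    have c1: "card C1 \<ge> 3" using cycle_card[OF C(4)] finite_subset[OF sub1(1) fin] by simp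
    have c2: "card C2 \<ge> 3" using cycle_card[OF C(5)] finite_subset[OF sub1(2) fin] by simp
    have disj: "C1 \<inter> C2 = {}" using comps_disjoint[of E, OF Esym C(1,2,3)] .
    have "card (C1 \<union> C2) = card C1 + card C2"
      using card_Un_disjoint[OF finite_subset[OF sub1(1) fin] finite_subset[OF sub1(2) fin] disj] .
    moreover have "card (C1 \<union> C2) \<le> card (V - S)" using sub1 fin by (intro card_mono) auto
    moreover have "card (V - S) < card V"
      using True idV finV by (intro psubset_card_mono) auto
    ultimately show False using c1 c2 cV by linarith
  next
    case False
    let ?U = "V - S"
    have idU: "id \<in> ?U" using False idV by simp
    have all: "component_of ?U E x = component_of ?U E id" if x: "x \<in> ?U" for x
    proof (cases "x = id")
      case False
      have "E x id" unfolding E_def order_supergraph_adj_def using False by (simp add: ord_id_sym)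
      hence "adj_in ?U E x id" using x idU by (simp add: adj_in_def)
      hence "id \<in> component_of ?U E x" by (simp add: component_of_def)
      from sym[OF comp_eq[of E, OF Esym this]] show ?thesis .
    qed simp
    have "components ?U E = {component_of ?U E id}"
      unfolding components_def using all idU by blast
    thus False using C(1,2,3) by simp
  qed
qed


lemma ord_two_comp:
  assumes "y \<in> component_of U (order_supergraph_adj G) x" "group.ord G x = 2"
    and U: "\<And>z. z \<in> U \<Longrightarrow> group.ord G z = 2 \<or> group.ord G z = 3"
  shows "group.ord G y = 2"
proof -
  have "(adj_in U (order_supergraph_adj G))\<^sup>*\<^sup>* x y" using assms(1) by (simp add: component_of_def)
  thus ?thesis
  proof (induction rule: rtranclp_induct)
    case base thus ?case using assms(2) by simp
  next
    case (step b c)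
    have "c \<in> U" "order_supergraph_adj G b c" using step(2) by (auto simp: adj_in_def)
    thus ?case using U[of c] step(3) by (auto simp: order_supergraph_adj_def)
  qed
qed

lemma big_sep:
  assumes "n \<ge> 4"
  shows "cyclically_separable (carrier (sym_group n)) (order_supergraph_adj (sym_group n))"
proof -
  define V where "V = carrier (sym_group n)"
  define E where "E = order_supergraph_adj (sym_group n)"
  define ord where "ord = group.ord (sym_group n)"
  define S where "S = {x \<in> V. ord x \<noteq> 2 \<and> ord x \<noteq> 3}"
  define U where "U = V - S"
  have U: "\<And>z. z \<in> U \<Longrightarrow> ord z = 2 \<or> ord z = 3" unfolding U_def S_def by auto
  have U': "z \<in> U" if "z \<in> V" "ord z = 2 \<or> ord z = 3" for z using that unfolding U_def S_def by auto
  define t1 where "t1 = Transposition.transpose (1::nat) 2"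
  define t2 where "t2 = Transposition.transpose (1::nat) 3"
  define t3 where "t3 = Transposition.transpose (2::nat) 3"
  define c1 where "c1 = t1 \<circ> t3"
  define c2 where "c2 = Transposition.transpose (3::nat) 2 \<circ> Transposition.transpose 2 1"
  define c3 where "c3 = t1 \<circ> Transposition.transpose 2 4"
  have mem: "(1::nat) \<in> {1..n}" "(2::nat) \<in> {1..n}" "(3::nat) \<in> {1..n}" "(4::nat) \<in> {1..n}"
    using assms by auto
  have p: "t1 permutes {1..n}" "t2 permutes {1..n}" "t3 permutes {1..n}"
    "Transposition.transpose 2 4 permutes {1..n}"
    unfolding t1_def t2_def t3_def using mem by (auto intro: permutes_swap_id)
  have pc: "c1 permutes {1..n}" "c2 permutes {1..n}" "c3 permutes {1..n}"
    unfolding c1_def c2_def c3_def using p mem by (auto intro!: permutes_compose permutes_swap_id)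
  have nid: "t1 \<noteq> id" "t2 \<noteq> id" "t3 \<noteq> id" "c1 \<noteq> id" "c2 \<noteq> id" "c3 \<noteq> id"
  proof -
    have "t1 1 \<noteq> id 1" "t2 1 \<noteq> id 1" "t3 2 \<noteq> id 2" "c1 1 \<noteq> id 1" "c2 1 \<noteq> id 1" "c3 1 \<noteq> id 1"
      by (auto simp: c1_def c2_def c3_def t1_def t2_def t3_def transpose_def)
    thus "t1 \<noteq> id" "t2 \<noteq> id" "t3 \<noteq> id" "c1 \<noteq> id" "c2 \<noteq> id" "c3 \<noteq> id" by metis+
  qed
  have o2: "ord t1 = 2" "ord t2 = 2" "ord t3 = 2" unfolding ord_def
    using p nid by (auto intro!: ord_2 simp: t1_def t2_def t3_def transpose_comp_involutory)
  have o3: "ord c1 = 3" "ord c2 = 3" "ord c3 = 3" unfolding ord_def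
    using pc nid by (auto intro!: ord_3 simp: c1_def c2_def c3_def t1_def t3_def three_cycle)
  have inV: "t1 \<in> V" "t2 \<in> V" "t3 \<in> V" "c1 \<in> V" "c2 \<in> V" "c3 \<in> V"
    unfolding V_def sym_group_carrier using p pc by auto
  have inU: "t1 \<in> U" "t2 \<in> U" "t3 \<in> U" "c1 \<in> U" "c2 \<in> U" "c3 \<in> U"
    using U' inV o2 o3 by auto
  have dt: "distinct [t1, t2, t3]"
  proof -
    have "t1 3 = 3" "t2 3 = 1" "t3 3 = 2" by (simp_all add: t1_def t2_def t3_def transpose_def)
    hence "t1 \<noteq> t2" "t1 \<noteq> t3" "t2 \<noteq> t3" by auto
    thus ?thesis by simp
  qed
  have dc: "distinct [c1, c2, c3]"
  proof -
    have "c1 3 = 1" "c2 3 = 2" "c3 3 = 3" by (simp_all add: c1_def c2_def c3_def t1_def t3_def transpose_def)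
    hence "c1 \<noteq> c2" "c1 \<noteq> c3" "c2 \<noteq> c3" by auto
    thus ?thesis by simp
  qed
  define C1 where "C1 = component_of U E t1"
  define C2 where "C2 = component_of U E c1"
  have C1: "C1 \<in> components U E" unfolding C1_def components_def using inU by auto
  have C2: "C2 \<in> components U E" unfolding C2_def components_def using inU by auto
  have "c1 \<notin> C1"
  proof
    assume "c1 \<in> C1"
    hence "ord c1 = 2" unfolding C1_def E_def ord_def
      using ord_two_comp[of c1 U "sym_group n" t1] o2 U unfolding ord_def by blast
    thus False using o3 by simp
  qed
  moreover have "c1 \<in> C2" unfolding C2_def component_of_def by simp
  ultimately have ne: "C1 \<noteq> C2" by blast
  have Eeq: "E x y" if "x \<noteq> y" "ord x = ord y" for x y
    using that unfolding E_def order_supergraph_adj_def ord_def by simp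
  have cyc: "has_cycle_in (component_of U E a) E"
    if d: "distinct [a, b, c]" and abc: "a \<in> U" "b \<in> U" "c \<in> U" and o: "ord a = ord b" "ord b = ord c" for a b c
  proof -
    have sub: "set [a, b, c] \<subseteq> component_of U E a"
    proof -
      have "adj_in U E a b" "adj_in U E a c" using abc d o Eeq by (auto simp: adj_in_def)
      thus ?thesis by (auto simp: component_of_def)
    qed
    have "\<forall>i < length [a, b, c]. E ([a, b, c] ! i) ([a, b, c] ! ((i + 1) mod length [a, b, c]))"
    proof (intro allI impI)
      fix i assume "i < length [a, b, c]"
      hence "i = 0 \<or> i = 1 \<or> i = 2" by auto
      thus "E ([a, b, c] ! i) ([a, b, c] ! ((i + 1) mod length [a, b, c]))"
        using d o by (auto intro!: Eeq)
    qed
    thus ?thesis unfolding has_cycle_in_def using d sub by (intro exI[of _ "[a, b, c]"]) auto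
  qed
  have h1: "has_cycle_in C1 E" unfolding C1_def using cyc[OF dt] inU o2 by simp
  have h2: "has_cycle_in C2 E" unfolding C2_def using cyc[OF dc] inU o3 by simp
  have "cyclic_vertex_cutset V E S"
    unfolding cyclic_vertex_cutset_def vertex_cutset_def
    using C1 C2 ne h1 h2 unfolding U_def S_def by blast
  hence "cyclically_separable V E" unfolding cyclically_separable_def by blast
  thus ?thesis using V_def E_def by simp
qed

theorem mainTheorem6:
  fixes n :: nat
  assumes "n \<ge> 1"
  shows "cyclically_separable (carrier (sym_group n)) (order_supergraph_adj (sym_group n))
           \<longleftrightarrow> n \<ge> 4"
proof (cases "n \<ge> 4")
  case True
  thus ?thesis using big_sep[OF True] by simp
next
  case False
  hence "n < 4" by simp
  thus ?thesis using small_not_sep[OF assms] False by simp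
qed

end
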